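(* In the setting below, the vector $v=1\otimes e^0\in V^{\Lambda_0}$ is a highest weight vector for $Vir\otimes\tilde{\mathfrak a}$ of type $Vir(\tfrac45,0)\otimes W^{\Omega_0}$, i.e. it satisfies conditions (HW1)–(HW5) with $h=0$ and $\omega_j=0$.
   Context: Setting. $Q$ is the $E_6$ root lattice with simple roots $\alpha_1,\dots,\alpha_6$ (Dynkin chain $\alpha_1-\alpha_3-\alpha_4-\alpha_5-\alpha_6$, $\alpha_2$ attached to $\alpha_4$), form $\langle\cdot,\cdot\rangle$ from the Cartan matrix, fundamental weights $\lambda_i$, $P=\bigoplus\mathbb Z\lambda_i$, $\mathfrak h=\mathbb C\otimes P$. $\varepsilon:P\times P\to\{\pm1\}$ is bimultiplicative with $[\varepsilon(\lambda_i,\lambda_j)]$ rows $(1,1,1,1,1,1)$, $(-1,1,1,1,1,-1)$, $(-1,1,1,1,1,1)$, $(1,-1,1,1,1,1)$, $(1,1,1,1,1,-1)$, $(1,1,1,1,1,1)$. $V_P=S(\hat{\mathfrak h}^-)\otimes\mathbb C[P]$ with Heisenberg operators $h(n)$ ($[h(m),h'(n)]=m\langle h,h'\rangle\delta_{m+n,0}$, $h(n)1=0$ for $n>0$, $h(0)(u\otimes e^\beta)=\langle h,\beta\rangle u\otimes e^\beta$). For $\alpha\in Q$: $Y(1\otimes e^\alpha,z)=\exp(\sum_{k\ge1}\frac{\alpha(-k)}kz^k)\exp(-\sum_{k\ge1}\frac{\alpha(k)}kz^{-k})e_\alpha z^{\alpha(0)}=\sum_{n}\{1\otimes e^\alpha\}_nz^{-n-1}$,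 $e_\alpha(u\otimes e^\beta)=\varepsilon(\alpha,\beta)u\otimes e^{\alpha+\beta}$, $z^{\alpha(0)}(u\otimes e^\beta)=z^{\langle\alpha,\beta\rangle}u\otimes e^\beta$; $Y(h(-1)1\otimes e^0,z)=\sum_nh(n)z^{-n-1}$, and more generally $Y(h_1(-1)\cdots h_k(-1)\otimes e^\alpha,z)=\,:h_1(z)\cdots h_k(z)Y(1\otimes e^\alpha,z):$ (normal ordering: annihilation operators $h(n)$, $n>0$, to the right). $V^{\Lambda_0}=S(\hat{\mathfrak h}^-)\otimes\mathbb C[Q]$, $V^{\Lambda_1}$ and $V^{\Lambda_6}$ are the subspaces spanned by $S(\hat{\mathfrak h}^-)\otimes e^\nu$ with $\nu\in\lambda_1+Q$, resp. $\nu\in\lambda_6+Q$; these are the level one irreducible modules of the affine algebra of type $E_6^{(1)}$. $\tau$: $\alpha_1\leftrightarrow\alpha_6$, $\alpha_3\leftrightarrow\alpha_5$ ($\lambda_1\leftrightarrow\lambda_6$, $\lambda_3\leftrightarrow\lambda_5$); $\mathrm{Proj}(\nu)=(\nu+\tau\nu)/2$. $\theta=\alpha_1+2\alpha_2+2\alpha_3+3\alpha_4+2\alpha_5+\alpha_6$. The $F_4^{(1)}$ subalgebra $\tilde{\mathfrak a}$ has Chevalley-type raising operators $\{\beta_1\}_0=\{1\otimes e^{\alpha_2}\}_0$, $\{\beta_2\}_0=\{1\otimes e^{\alpha_4}\}_0$, $\{\beta_3\}_0=\{1\otimes e^{\alpha_3}\}_0+\{1\otimes e^{\alpha_5}\}_0$,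 $\{\beta_4\}_0=\{1\otimes e^{\alpha_1}\}_0+\{1\otimes e^{\alpha_6}\}_0$, and $\{1\otimes e^{-\theta}\}_1$. The coset conformal vector is $\omega=\frac1{10}[(-\lambda_1+\lambda_6)(-1)^2+(\lambda_3-\lambda_5)(-1)^2+(\lambda_1-\lambda_3+\lambda_5-\lambda_6)(-1)^2]\otimes e^0+\frac15(-1\otimes e^{\pm\gamma_1}-1\otimes e^{\pm\gamma_2}+1\otimes e^{\pm\gamma_3})$, where $\gamma_1=\alpha_1-\alpha_6$, $\gamma_2=\alpha_3-\alpha_5$, $\gamma_3=\gamma_1+\gamma_2$ and $1\otimes e^{\pm\gamma}$ means $1\otimes e^{\gamma}+1\otimes e^{-\gamma}$; $L(n)=\{\omega\}_{n+1}$ gives a Virasoro representation of central charge $4/5$ commuting with $\tilde{\mathfrak a}$. The $F_4$ fundamental weights are $\omega_1=\lambda_2,\omega_2=\lambda_4,\omega_3=\frac{\lambda_3+\lambda_5}2,\omega_4=\frac{\lambda_1+\lambda_6}2$; $\Omega_0,\Omega_4$ are the level one $F_4^{(1)}$ weights with finite parts $0,\omega_4$, and $W^{\Omega_j}$ the corresponding irreducible modules; $Vir(c,h)$ is the irreducible highest weight Virasoro module. A nonzero $v\in V_P$ is a highest weight vector of type $Vir(\frac45,h)\otimes W^{\Omega_j}$ if: (HW1) $\{1\otimes e^{-\theta}\}_1v=0$; (HW2) $\{\beta_i\}_0v=0$ for $i=1,\dots,4$; (HW3) $L(1)v=L(2)v=0$; (HW4) $L(0)v=hv$; (HW5) $v\in\bigoplus_kS(\hat{\mathfrak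 h}^-)\otimes e^{\nu_k}$ with $\mathrm{Proj}(\nu_k)=\omega_j$ for all $k$ (where $\omega_0:=0$). *)

theory Defs
  imports "HOL-Analysis.Analysis" "HOL-Library.Multiset" "HOL-Library.Function_Algebras"
begin

section \<open>E6 data (indices 1..6, Bourbaki labelling)\<close>

definition cartan :: "nat \<Rightarrow> nat \<Rightarrow> int" where
  "cartan i j = (if i = j then 2
     else if {i,j} \<in> {{1,3},{3,4},{4,5},{5,6},{2,4}} then -1 else 0)"

text \<open>Gram matrix of the fundamental weights: gram i j = <lambda_i, lambda_j>
  (the inverse of the Cartan matrix).\<close>
definition gram_row :: "nat \<Rightarrow> real list" where
  "gram_row i = (if i = 1 then [4,3,5,6,4,2]
     else if i = 2 then [3,6,6,9,6,3]
     else if i = 3 then [5,6,10,12,8,4]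
     else if i = 4 then [6,9,12,18,12,6]
     else if i = 5 then [4,6,8,12,10,5]
     else [2,3,4,6,5,4])"

definition gram :: "nat \<Rightarrow> nat \<Rightarrow> real" where
  "gram i j = (gram_row i ! (j - 1)) / 3"

text \<open>Weights (elements of P) are given by their integer coordinates w.r.t.
  lambda_1..lambda_6 (only the entries 1..6 are relevant); elements of
  h = C (x) P by their complex coordinates w.r.t. lambda_1..lambda_6.\<close>
type_synonym wt = "nat \<Rightarrow> int"
type_synonym hvec = "nat \<Rightarrow> complex"

definition lam :: "nat \<Rightarrow> wt" where
  "lam i = (\<lambda>j. if j = i then 1 else 0)"

definition alpha :: "nat \<Rightarrow> wt" where
  "alpha i = (\<lambda>j. if j \<in> {1..6} then cartan i j else 0)"

definition theta :: wt where
  "theta = (\<lambda>j. alpha 1 j + 2 * alpha 2 j + 2 * alpha 3 j + 3 * alpha 4 j + 2 * alpha 5 j + alpha 6 j)"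

definition hv :: "wt \<Rightarrow> hvec" where
  "hv \<mu> = (\<lambda>i. of_int (\<mu> i))"

definition form_h :: "hvec \<Rightarrow> hvec \<Rightarrow> complex" where
  "form_h h h' = (\<Sum>i\<in>{1..6}. \<Sum>j\<in>{1..6}. h i * of_real (gram i j) * h' j)"

definition form_w :: "wt \<Rightarrow> wt \<Rightarrow> real" where
  "form_w \<mu> \<nu> = (\<Sum>i\<in>{1..6}. \<Sum>j\<in>{1..6}. of_int (\<mu> i) * gram i j * of_int (\<nu> j))"

definition in_P :: "wt \<Rightarrow> bool" where
  "in_P \<nu> \<longleftrightarrow> (\<forall>i. i \<notin> {1..6} \<longrightarrow> \<nu> i = 0)"

definition in_Q :: "wt \<Rightarrow> bool" where
  "in_Q \<nu> \<longleftrightarrow> (\<exists>c :: nat \<Rightarrow> int. \<nu> = (\<lambda>j. \<Sum>i\<in>{1..6}. c i * alpha i j))"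

text \<open>The bimultiplicative cocycle: eps_mat i j = epsilon(lambda_i, lambda_j).\<close>
definition eps_mat :: "nat \<Rightarrow> nat \<Rightarrow> int" where
  "eps_mat i j = (if (i,j) \<in> {(2,1),(2,6),(3,1),(4,2),(5,6)} then -1 else 1)"

definition eps :: "wt \<Rightarrow> wt \<Rightarrow> complex" where
  "eps \<mu> \<nu> = (\<Prod>i\<in>{1..6}. \<Prod>j\<in>{1..6}. of_int (eps_mat i j ^ nat \<bar>\<mu> i * \<nu> j\<bar>))"

definition tau_idx :: "nat \<Rightarrow> nat" where
  "tau_idx i = (if i = 1 then 6 else if i = 6 then 1 else if i = 3 then 5
                else if i = 5 then 3 else i)"

definition Proj :: "wt \<Rightarrow> nat \<Rightarrow> real" where
  "Proj \<nu> = (\<lambda>i. (of_int (\<nu> i) + of_int (\<nu> (tau_idx i))) / 2)"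

text \<open>F4 fundamental weights omega_1..omega_4 (omega_0 := 0), in lambda coordinates.\<close>
definition F4_weight :: "nat \<Rightarrow> nat \<Rightarrow> real" where
  "F4_weight j = (if j = 1 then (\<lambda>i. if i = 2 then 1 else 0)
     else if j = 2 then (\<lambda>i. if i = 4 then 1 else 0)
     else if j = 3 then (\<lambda>i. if i = 3 \<or> i = 5 then 1/2 else 0)
     else if j = 4 then (\<lambda>i. if i = 1 \<or> i = 6 then 1/2 else 0)
     else (\<lambda>i. 0))"

text \<open>Basis of V_P = S(h^-) (x) C[P]: a monomial in the variables lambda_i(-n)
  (i in 1..6, n >= 1), encoded as a multiset of pairs (i,n), tensored with e^beta.\<close>
type_synonym basis = "(nat \<times> nat) multiset \<times> wt"
type_synonym vec = "basis \<Rightarrow> complex"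

definition valid_basis :: "basis \<Rightarrow> bool" where
  "valid_basis b \<longleftrightarrow> set_mset (fst b) \<subseteq> {1..6} \<times> {1..} \<and> in_P (snd b)"

definition VP :: "vec set" where
  "VP = {f. finite {b. f b \<noteq> 0} \<and> (\<forall>b. f b \<noteq> 0 \<longrightarrow> valid_basis b)}"

definition V_Lambda0 :: "vec set" where
  "V_Lambda0 = {f \<in> VP. \<forall>b. f b \<noteq> 0 \<longrightarrow> in_Q (snd b)}"

definition vac :: vec where
  "vac = (\<lambda>(M, \<beta>). if M = {#} \<and> \<beta> = (\<lambda>_. 0) then 1 else 0)"

text \<open>h(-n), n >= 1 (creation: multiplication by sum_i h_i lambda_i(-n)).\<close>
definition hcre :: "hvec \<Rightarrow> nat \<Rightarrow> vec \<Rightarrow> vec" where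
  "hcre h n f = (\<lambda>(M, \<beta>). \<Sum>i\<in>{1..6}.
      h i * (if (i, n) \<in># M then f (M - {#(i, n)#}, \<beta>) else 0))"

text \<open>h(n), n >= 1 (annihilation: the derivation with h(n) lambda_j(-n) = n <h,lambda_j>).\<close>
definition hann :: "hvec \<Rightarrow> nat \<Rightarrow> vec \<Rightarrow> vec" where
  "hann h n f = (\<lambda>(M, \<beta>). \<Sum>j\<in>{1..6}.
      of_nat n * form_h h (hv (lam j)) * of_nat (count M (j, n) + 1) * f (M + {#(j, n)#}, \<beta>))"

definition hzero :: "hvec \<Rightarrow> vec \<Rightarrow> vec" where
  "hzero h f = (\<lambda>(M, \<beta>). form_h h (hv \<beta>) * f (M, \<beta>))"

definition hmode :: "hvec \<Rightarrow> int \<Rightarrow> vec \<Rightarrow> vec" where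
  "hmode h m = (if m < 0 then hcre h (nat (- m)) else if m = 0 then hzero h else hann h (nat m))"

text \<open>Coefficient of z^p in exp(sum_{k>=1} alpha(-k) z^k / k), defined by the
  recursion p E_p = sum_{k=1}^p alpha(-k) E_{p-k}.\<close>
fun Eminus :: "wt \<Rightarrow> nat \<Rightarrow> vec \<Rightarrow> vec" where
  "Eminus a 0 f = f"
| "Eminus a (Suc p) f = (\<lambda>x. (1 / of_nat (Suc p)) *
      (\<Sum>k\<in>{1..Suc p}. hcre (hv a) k (Eminus a (Suc p - k) f) x))"

text \<open>Coefficient of z^(-q) in exp(- sum_{k>=1} alpha(k) z^(-k) / k).\<close>
fun Eplus :: "wt \<Rightarrow> nat \<Rightarrow> vec \<Rightarrow> vec" where
  "Eplus a 0 f = f"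
| "Eplus a (Suc q) f = (\<lambda>x. (1 / of_nat (Suc q)) *
      (\<Sum>k\<in>{1..Suc q}. hann (- hv a) k (Eplus a (Suc q - k) f) x))"

definition e_op :: "wt \<Rightarrow> vec \<Rightarrow> vec" where
  "e_op a f = (\<lambda>(M, \<gamma>). eps a (\<gamma> - a) * f (M, \<gamma> - a))"

text \<open>The mode {1 (x) e^alpha}_n, i.e. the coefficient of z^(-n-1) in
  E^-(alpha,z) E^+(alpha,z) e_alpha z^(alpha(0)).  On the sector of output e^gamma
  the input sector is beta = gamma - alpha, and the coefficient collects the pairs
  (p,q) with p - q + <alpha,beta> = -n-1.\<close>
definition Y_exp :: "wt \<Rightarrow> int \<Rightarrow> vec \<Rightarrow> vec" where
  "Y_exp a n f = (\<lambda>(M, \<gamma>).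
     infsum (\<lambda>(p, q). Eminus a p (Eplus a q (e_op a f)) (M, \<gamma>))
       {(p, q). real p - real q + form_w a (\<gamma> - a) = - real_of_int (n + 1)})"

text \<open>Normal ordered product :a(m) b(m'): (annihilators h(k), k > 0, to the right).\<close>
definition nord :: "hvec \<Rightarrow> int \<Rightarrow> hvec \<Rightarrow> int \<Rightarrow> vec \<Rightarrow> vec" where
  "nord a m b m' = (if m > 0 \<and> m' \<le> 0 then hmode b m' \<circ> hmode a m
                    else hmode a m \<circ> hmode b m')"

text \<open>The mode {a(-1) b(-1) 1 (x) e^0}_n = sum_m :a(m) b(n-1-m):.\<close>
definition Y_hh :: "hvec \<Rightarrow> hvec \<Rightarrow> int \<Rightarrow> vec \<Rightarrow> vec" where
  "Y_hh a b n f = (\<lambda>x. infsum (\<lambda>m. nord a m b (n - 1 - m) f x) (UNIV :: int set))"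

definition gamma1 :: wt where "gamma1 = alpha 1 - alpha 6"
definition gamma2 :: wt where "gamma2 = alpha 3 - alpha 5"
definition gamma3 :: wt where "gamma3 = gamma1 + gamma2"

definition hx :: hvec where "hx = hv (- lam 1 + lam 6)"
definition hy :: hvec where "hy = hv (lam 3 - lam 5)"
definition hw :: hvec where "hw = hv (lam 1 - lam 3 + lam 5 - lam 6)"

definition Y_exp_pm :: "wt \<Rightarrow> int \<Rightarrow> vec \<Rightarrow> vec" where
  "Y_exp_pm g n f = Y_exp g n f + Y_exp (- g) n f"

text \<open>L(n) = {omega}_{n+1}.\<close>
definition Lop :: "int \<Rightarrow> vec \<Rightarrow> vec" where
  "Lop n f = (\<lambda>x. (1/10) * (Y_hh hx hx (n+1) f x + Y_hh hy hy (n+1) f x + Y_hh hw hw (n+1) f x)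
     + (1/5) * (- Y_exp_pm gamma1 (n+1) f x - Y_exp_pm gamma2 (n+1) f x + Y_exp_pm gamma3 (n+1) f x))"

definition beta_op :: "nat \<Rightarrow> vec \<Rightarrow> vec" where
  "beta_op i f = (if i = 1 then Y_exp (alpha 2) 0 f
     else if i = 2 then Y_exp (alpha 4) 0 f
     else if i = 3 then Y_exp (alpha 3) 0 f + Y_exp (alpha 5) 0 f
     else Y_exp (alpha 1) 0 f + Y_exp (alpha 6) 0 f)"

text \<open>Highest weight vector of type Vir(4/5,h) (x) W^{Omega_j}: conditions (HW1)-(HW5).\<close>
definition is_hw_vector :: "vec \<Rightarrow> complex \<Rightarrow> nat \<Rightarrow> bool" where
  "is_hw_vector v h j \<longleftrightarrow>
     v \<in> VP \<and> v \<noteq> 0 \<and>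
     Y_exp (- theta) 1 v = 0 \<and>
     (\<forall>i\<in>{1..4}. beta_op i v = 0) \<and>
     Lop 1 v = 0 \<and> Lop 2 v = 0 \<and>
     Lop 0 v = (\<lambda>b. h * v b) \<and>
     (\<forall>b. v b \<noteq> 0 \<longrightarrow> Proj (snd b) = F4_weight j)"

end

theory Submission
  imports Defs
begin

definition nilsupp :: "vec \<Rightarrow> bool" where
  "nilsupp f \<longleftrightarrow> (\<forall>M \<beta>. M \<noteq> {#} \<longrightarrow> f (M, \<beta>) = 0)"

lemma hann_nil: "nilsupp f \<Longrightarrow> hann h k f = 0"
  unfolding nilsupp_def hann_def by (auto simp: fun_eq_iff)

lemma hann_0: "hann h k 0 = 0"
  unfolding hann_def by (auto simp: fun_eq_iff)

lemma hcre_0: "hcre h k 0 = 0"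
  unfolding hcre_def zero_fun_def by (auto simp: fun_eq_iff)

lemma hzero_0: "hzero h 0 = 0"
  unfolding hzero_def by (auto simp: fun_eq_iff)

lemma hmode_0: "hmode h m 0 = 0"
  unfolding hmode_def by (simp add: hann_0 hcre_0 hzero_0)

lemma Eminus_0: "Eminus a p 0 = 0"
proof (induction p rule: less_induct)
  case (less p)
  then show ?case
  proof (cases p)
    case (Suc r)
    have "\<forall>k\<in>{1..Suc r}. hcre (hv a) k (Eminus a (Suc r - k) 0) = 0"
    proof
      fix k assume k: "k \<in> {1..Suc r}"
      have "Suc r - k < p" using k Suc by auto
      then have "Eminus a (Suc r - k) 0 = 0" using less.IH by blast
      then show "hcre (hv a) k (Eminus a (Suc r - k) 0) = 0" by (simp add: hcre_0)
    qed
    then show ?thesis using Suc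
    proof (intro ext)
      fix x
      have "(\<Sum>k\<in>{1..Suc r}. hcre (hv a) k (Eminus a (Suc r - k) 0) x) = 0"
        using \<open>\<forall>k\<in>{1..Suc r}. _\<close> by (intro sum.neutral) simp
      then show "Eminus a p 0 x = 0 x" using Suc by simp
    qed
  qed simp
qed

lemma Eplus_nil: "nilsupp f \<Longrightarrow> Eplus a q f = (if q = 0 then f else 0)"
proof (induction q rule: less_induct)
  case (less q)
  show ?case
  proof (cases q)
    case 0 then show ?thesis by simp
  next
    case (Suc r)
    have "\<forall>k\<in>{1..Suc r}. hann (- hv a) k (Eplus a (Suc r - k) f) = 0"
    proof
      fix k assume k: "k \<in> {1..Suc r}"
      have "Suc r - k < q" using k Suc by auto
      then have "Eplus a (Suc r - k) f = (if Suc r - k = 0 then f else 0)"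
        using less by blast
      then show "hann (- hv a) k (Eplus a (Suc r - k) f) = 0"
        using less.prems by (auto simp: hann_nil hann_0)
    qed
    then show ?thesis using Suc by (simp add: fun_eq_iff del: sum.cl_ivl_Suc)
  qed
qed

definition sect :: "wt \<Rightarrow> vec \<Rightarrow> bool" where
  "sect c f \<longleftrightarrow> (\<forall>M \<beta>. \<beta> \<noteq> c \<longrightarrow> f (M, \<beta>) = 0)"

lemma hcre_sect: "sect c f \<Longrightarrow> sect c (hcre h k f)"
  unfolding sect_def hcre_def by (auto intro!: sum.neutral)

lemma Eminus_sect: "sect c f \<Longrightarrow> sect c (Eminus a p f)"
proof (induction p rule: less_induct)
  case (less p)
  show ?case
  proof (cases p)
    case 0 then show ?thesis using less by simp
  next
    case (Suc r)
    have "\<forall>k\<in>{1..Suc r}. sect c (hcre (hv a) k (Eminus a (Suc r - k) f))"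
    proof
      fix k assume k: "k \<in> {1..Suc r}"
      have "Suc r - k < p" using k Suc by auto
      then show "sect c (hcre (hv a) k (Eminus a (Suc r - k) f))"
        using less by (blast intro: hcre_sect)
    qed
    then show ?thesis using Suc unfolding sect_def
      by (simp del: sum.cl_ivl_Suc add: sum.neutral)
  qed
qed

lemma evac_nil: "nilsupp (e_op a vac)"
  unfolding nilsupp_def e_op_def vac_def by auto

lemma evac_sect: "sect a (e_op a vac)"
  unfolding sect_def e_op_def vac_def by (auto simp: fun_eq_iff)

lemma form_w_zero: "form_w a (\<lambda>_. 0) = 0"
  unfolding form_w_def by simp

lemma Y_exp_vac: assumes "n \<ge> 0" shows "Y_exp a n vac = 0"
proof -
  have "\<And>M \<gamma>. Y_exp a n vac (M, \<gamma>) = 0"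
  proof -
    fix M \<gamma>
    show "Y_exp a n vac (M, \<gamma>) = 0"
    proof -
    have "\<And>p q. real p - real q + form_w a (\<gamma> - a) = - real_of_int (n + 1) \<Longrightarrow> Eminus a p (Eplus a q (e_op a vac)) (M, \<gamma>) = 0"
    proof -
      fix p q
      assume pq: "real p - real q + form_w a (\<gamma> - a) = - real_of_int (n + 1)"
      show "Eminus a p (Eplus a q (e_op a vac)) (M, \<gamma>) = 0"
      proof (cases "q = 0")
        case False
        then show ?thesis using Eplus_nil[OF evac_nil] by (simp add: Eminus_0)
      next
        case True
        show ?thesis
        proof (cases "\<gamma> = a")
          case False
          have "sect a (Eminus a p (e_op a vac))" by (rule Eminus_sect[OF evac_sect])
          then show ?thesis using True False unfolding sect_def by simp
        next
          case g: True
          have "\<gamma> - a = (\<lambda>_. 0)" using g by (auto simp: fun_eq_iff)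
          then have "real p = - real_of_int (n + 1)" using pq True form_w_zero by simp
          then show ?thesis using assms by linarith
        qed
      qed
    qed
    then show ?thesis unfolding Y_exp_def by (simp, intro infsum_0) auto
    qed
  qed
  then show ?thesis by (auto simp: fun_eq_iff)
qed

lemma vac_nil: "nilsupp vac" unfolding nilsupp_def vac_def by auto

lemma hzero_vac: "hzero h vac = 0"
  unfolding hzero_def vac_def hv_def form_h_def by (auto simp: fun_eq_iff)

lemma nord_vac: assumes "n \<ge> 1" shows "nord a m b (n - 1 - m) vac = 0"
proof (cases "m > 0 \<and> n - 1 - m \<le> 0")
  case True
  then show ?thesis unfolding nord_def hmode_def
    by (simp add: hann_nil[OF vac_nil] hcre_0 hzero_0 hann_0)
next
  case False
  then have "n - 1 - m \<ge> 0" using assms by linarith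
  then show ?thesis using False unfolding nord_def hmode_def
    by (auto simp: hann_nil[OF vac_nil] hzero_vac hann_0 hcre_0 hzero_0)
qed

lemma Y_hh_vac: assumes "n \<ge> 1" shows "Y_hh a b n vac = 0"
  unfolding Y_hh_def using nord_vac[OF assms] by (simp add: fun_eq_iff)

lemma Lop_vac: assumes "n \<ge> 0" shows "Lop n vac = 0"
proof -
  have "n + 1 \<ge> 1" "n + 1 \<ge> 0" using assms by auto
  then show ?thesis unfolding Lop_def Y_exp_pm_def
    by (simp add: Y_hh_vac Y_exp_vac fun_eq_iff)
qed

lemma vac_VP: "vac \<in> VP"
proof -
  have "{b. vac b \<noteq> 0} = {({#}, \<lambda>_. 0)}" by (auto simp: vac_def split: prod.splits)
  then show ?thesis unfolding VP_def valid_basis_def in_P_def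
    by (auto simp: vac_def split: if_splits prod.splits)
qed

theorem lemma6p1:
  shows "vac \<in> V_Lambda0 \<and> is_hw_vector vac 0 0"
proof -
  have q: "in_Q (\<lambda>_. 0)" unfolding in_Q_def by (rule exI[of _ "\<lambda>_. 0"]) simp
  have nz: "vac \<noteq> 0"
  proof
    assume "vac = 0"
    then have "vac ({#}, \<lambda>_. 0) = 0" by simp
    then show False by (simp add: vac_def)
  qed
  have sup: "\<And>b. vac b \<noteq> 0 \<Longrightarrow> b = ({#}, \<lambda>_. 0)"
    by (auto simp: vac_def split: if_splits prod.splits)
  have pr: "Proj (\<lambda>_. 0) = F4_weight 0"
    unfolding Proj_def F4_weight_def by (simp add: fun_eq_iff)
  show ?thesis
    unfolding V_Lambda0_def is_hw_vector_def beta_op_def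
    using vac_VP nz q pr sup
    by (auto simp: Y_exp_vac Lop_vac fun_eq_iff)
qed

end
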